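(* Let $\mu$ be a joint distribution of a triple $(X,A,Y)$ with $X\in\mathcal{X}\subseteq\mathbb{R}^d$, $A\in\{0,1\}$ with $\Pr(A=0),\Pr(A=1)>0$, and $Y\in[-1,1]$. Let $h:\mathcal{X}\to\mathbb{R}$ be measurable and $\widehat{Y}=h(X)$. If $\widehat{Y}$ is statistically independent of $A$ (statistical parity), then for every $p\geq 1$, $$\varepsilon_{p,\mu_0}(\widehat{Y})+\varepsilon_{p,\mu_1}(\widehat{Y})\geq W_p(Y_\sharp\mu_0,Y_\sharp\mu_1).$$
   Context: For $a\in\{0,1\}$, $\mu_a$ is the conditional distribution of $(X,Y)$ given $A=a$. For a distribution $\nu$, $\varepsilon_{p,\nu}(\widehat{Y}):=\left(\mathbb{E}_\nu[|\widehat{Y}-Y|^p]\right)^{1/p}$. $Y_\sharp\mu_a$ denotes the distribution of $Y$ under $\mu_a$. $W_p(\nu,\nu')=\left(\inf_{\gamma\in\Gamma(\nu,\nu')}\int|t-t'|^p\,d\gamma(t,t')\right)^{1/p}$ is the $p$-Wasserstein distance, where $\Gamma(\nu,\nu')$ is the set of couplings of $\nu$ and $\nu'$. *)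

theory Defs
  imports "HOL-Probability.Probability"
begin

definition ennpowr :: "ennreal \<Rightarrow> real \<Rightarrow> ennreal" where
  "ennpowr x r = (if x = \<infinity> then \<infinity> else ennreal (enn2real x powr r))"

definition cond_measure :: "'o measure \<Rightarrow> ('o \<Rightarrow> nat) \<Rightarrow> nat \<Rightarrow> 'o measure" where
  "cond_measure M A a = uniform_measure M {\<omega> \<in> space M. A \<omega> = a}"

definition eps_p :: "real \<Rightarrow> 'o measure \<Rightarrow> ('o \<Rightarrow> real) \<Rightarrow> ('o \<Rightarrow> real) \<Rightarrow> ennreal" where
  "eps_p p \<nu> Yhat Y = ennpowr (\<integral>\<^sup>+ \<omega>. ennreal (\<bar>Yhat \<omega> - Y \<omega>\<bar> powr p) \<partial>\<nu>) (1 / p)"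

definition couplings :: "real measure \<Rightarrow> real measure \<Rightarrow> (real \<times> real) measure set" where
  "couplings \<nu> \<nu>' = {\<gamma>. sets \<gamma> = sets (borel \<Otimes>\<^sub>M borel) \<and> prob_space \<gamma> \<and>
       distr \<gamma> borel fst = \<nu> \<and> distr \<gamma> borel snd = \<nu>'}"

definition wasserstein :: "real \<Rightarrow> real measure \<Rightarrow> real measure \<Rightarrow> ennreal" where
  "wasserstein p \<nu> \<nu>' = ennpowr
     (INF \<gamma>\<in>couplings \<nu> \<nu>'. \<integral>\<^sup>+ z. ennreal (\<bar>fst z - snd z\<bar> powr p) \<partial>\<gamma>) (1 / p)"

end

theory Submission
  imports Defs
begin


lemma glue_marg:
  fixes b :: "'o \<Rightarrow> int"
  assumes P0: "prob_space M0" and P1: "prob_space M1" and S: "sets M1 = sets M0"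
    and bm[measurable]: "b \<in> measurable M0 (count_space UNIV)"
    and eq: "\<And>k. emeasure M1 {\<omega>\<in>space M0. b \<omega> = k} = emeasure M0 {\<omega>\<in>space M0. b \<omega> = k}"
  defines "q \<equiv> \<lambda>k. measure M0 {\<omega>\<in>space M0. b \<omega> = k}"
  defines "F \<equiv> \<lambda>z. if b (fst z) = b (snd z) then ennreal (1 / q (b (fst z))) else 0"
  shows "\<And>\<phi>. \<phi> \<in> borel_measurable M0 \<Longrightarrow> (\<integral>\<^sup>+ z. F z * \<phi> (fst z) \<partial>(M0 \<Otimes>\<^sub>M M1)) = (\<integral>\<^sup>+ \<omega>. \<phi> \<omega> \<partial>M0)"
    and "\<And>\<phi>. \<phi> \<in> borel_measurable M0 \<Longrightarrow> (\<integral>\<^sup>+ z. F z * \<phi> (snd z) \<partial>(M0 \<Otimes>\<^sub>M M1)) = (\<integral>\<^sup>+ \<omega>. \<phi> \<omega> \<partial>M1)"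
    and "F \<in> borel_measurable (M0 \<Otimes>\<^sub>M M1)"
proof -
  interpret p0: prob_space M0 by fact
  interpret p1: prob_space M1 by fact
  interpret pp: pair_prob_space M0 M1 by unfold_locales
  have sp: "space M1 = space M0" using S by (rule sets_eq_imp_space_eq)
  have bm1[measurable]: "b \<in> measurable M1 (count_space UNIV)"
    using bm by (simp add: measurable_cong_sets[OF S refl])
  have K[measurable]: "{\<omega>\<in>space M0. b \<omega> = k} \<in> sets M0" for k by measurable
  have K1[measurable]: "{\<omega>\<in>space M0. b \<omega> = k} \<in> sets M1" for k using K S by simp
  have e0: "emeasure M0 {\<omega>\<in>space M0. b \<omega> = k} = ennreal (q k)" for k
    unfolding q_def by (simp add: p0.emeasure_eq_measure)
  have e1: "emeasure M1 {\<omega>\<in>space M0. b \<omega> = k} = ennreal (q k)" for k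
    using eq e0 by simp
  have qnn: "q k \<ge> 0" for k unfolding q_def by simp
  have cq: "ennreal (1 / q k) * ennreal (q k) = (if q k = 0 then 0 else 1)" for k
    using qnn[of k] by (simp add: ennreal_mult'[symmetric])
  have null: "{\<omega>\<in>space M0. q (b \<omega>) = 0} \<in> null_sets M0"
  proof -
    have "(\<Union>k\<in>{k. q k = 0}. {\<omega>\<in>space M0. b \<omega> = k}) \<in> null_sets M0"
      by (rule null_sets_UN') (auto simp: null_sets_def e0)
    moreover have "(\<Union>k\<in>{k. q k = 0}. {\<omega>\<in>space M0. b \<omega> = k}) = {\<omega>\<in>space M0. q (b \<omega>) = 0}" by auto
    ultimately show ?thesis by simp
  qed
  have null1: "{\<omega>\<in>space M0. q (b \<omega>) = 0} \<in> null_sets M1"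
  proof -
    have "(\<Union>k\<in>{k. q k = 0}. {\<omega>\<in>space M0. b \<omega> = k}) \<in> null_sets M1"
      by (rule null_sets_UN') (auto simp: null_sets_def e1)
    moreover have "(\<Union>k\<in>{k. q k = 0}. {\<omega>\<in>space M0. b \<omega> = k}) = {\<omega>\<in>space M0. q (b \<omega>) = 0}" by auto
    ultimately show ?thesis by simp
  qed
  show Fm: "F \<in> borel_measurable (M0 \<Otimes>\<^sub>M M1)"
    unfolding F_def by measurable
  show "(\<integral>\<^sup>+ z. F z * \<phi> (fst z) \<partial>(M0 \<Otimes>\<^sub>M M1)) = (\<integral>\<^sup>+ \<omega>. \<phi> \<omega> \<partial>M0)"
    if [measurable]: "\<phi> \<in> borel_measurable M0" for \<phi>
  proof -
    have "(\<integral>\<^sup>+ z. F z * \<phi> (fst z) \<partial>(M0 \<Otimes>\<^sub>M M1)) = (\<integral>\<^sup>+ x. \<integral>\<^sup>+ y. F (x,y) * \<phi> x \<partial>M1 \<partial>M0)"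
    proof -
      have "(\<lambda>z. F z * \<phi> (fst z)) \<in> borel_measurable (M0 \<Otimes>\<^sub>M M1)" using Fm by measurable
      from p1.nn_integral_fst[OF this] show ?thesis by simp
    qed
    also have "\<dots> = (\<integral>\<^sup>+ x. \<phi> x \<partial>M0)"
    proof (rule nn_integral_cong_AE)
      show "AE x in M0. (\<integral>\<^sup>+ y. F (x,y) * \<phi> x \<partial>M1) = \<phi> x"
      proof (rule AE_I'[OF null], safe)
        fix x assume x: "x \<in> space M0" and "(\<integral>\<^sup>+ y. F (x,y) * \<phi> x \<partial>M1) \<noteq> \<phi> x"
        moreover have "(\<integral>\<^sup>+ y. F (x,y) * \<phi> x \<partial>M1) = (\<integral>\<^sup>+ y. (ennreal (1 / q (b x)) * \<phi> x) * indicator {\<omega>\<in>space M0. b \<omega> = b x} y \<partial>M1)"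
          by (rule nn_integral_cong) (auto simp: F_def sp split: split_indicator)
        moreover have "\<dots> = (if q (b x) = 0 then 0 else \<phi> x)"
        proof -
          have "(ennreal (1 / q (b x)) * \<phi> x) * ennreal (q (b x)) = \<phi> x * (ennreal (1 / q (b x)) * ennreal (q (b x)))"
            by (simp add: mult_ac)
          then show ?thesis by (subst nn_integral_cmult_indicator) (auto simp: e1 cq)
        qed
        ultimately show "q (b x) = 0" by (auto split: if_splits)
      qed
    qed
    finally show ?thesis .
  qed
  show "(\<integral>\<^sup>+ z. F z * \<phi> (snd z) \<partial>(M0 \<Otimes>\<^sub>M M1)) = (\<integral>\<^sup>+ \<omega>. \<phi> \<omega> \<partial>M1)"
    if [measurable]: "\<phi> \<in> borel_measurable M0" for \<phi>
  proof -
    have [measurable]: "\<phi> \<in> borel_measurable M1" using that by (simp add: measurable_cong_sets[OF S refl])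
    have "(\<integral>\<^sup>+ z. F z * \<phi> (snd z) \<partial>(M0 \<Otimes>\<^sub>M M1)) = (\<integral>\<^sup>+ y. \<integral>\<^sup>+ x. F (x,y) * \<phi> y \<partial>M0 \<partial>M1)"
    proof -
      have "(\<lambda>z. F z * \<phi> (snd z)) \<in> borel_measurable (M0 \<Otimes>\<^sub>M M1)" using Fm by measurable
      from pp.nn_integral_snd[OF this] show ?thesis by simp
    qed
    also have "\<dots> = (\<integral>\<^sup>+ x. \<phi> x \<partial>M1)"
    proof (rule nn_integral_cong_AE)
      show "AE y in M1. (\<integral>\<^sup>+ x. F (x,y) * \<phi> y \<partial>M0) = \<phi> y"
      proof (rule AE_I'[OF null1], safe)
        fix y assume y: "y \<in> space M1" and "(\<integral>\<^sup>+ x. F (x,y) * \<phi> y \<partial>M0) \<noteq> \<phi> y"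
        moreover have "(\<integral>\<^sup>+ x. F (x,y) * \<phi> y \<partial>M0) = (\<integral>\<^sup>+ x. (ennreal (1 / q (b y)) * \<phi> y) * indicator {\<omega>\<in>space M0. b \<omega> = b y} x \<partial>M0)"
          by (rule nn_integral_cong) (auto simp: F_def sp split: split_indicator)
        moreover have "\<dots> = (if q (b y) = 0 then 0 else \<phi> y)"
        proof -
          have "(ennreal (1 / q (b y)) * \<phi> y) * ennreal (q (b y)) = \<phi> y * (ennreal (1 / q (b y)) * ennreal (q (b y)))"
            by (simp add: mult_ac)
          then show ?thesis by (subst nn_integral_cmult_indicator) (auto simp: e0 cq)
        qed
        ultimately show "y \<in> space M0" "q (b y) = 0" using y sp by (auto split: if_splits)
      qed
    qed
    finally show ?thesis .
  qed
qed

lemma conv2: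
  fixes x y a b p :: real
  assumes x: "x \<ge> 0" and y: "y \<ge> 0" and a: "a > 0" and b: "b > 0" and p: "p \<ge> 1"
  shows "(x + y) powr p \<le> (a + b) powr (p - 1) * (x powr p / a powr (p - 1) + y powr p / b powr (p - 1))"
proof -
  have ab: "a + b > 0" using a b by simp
  have pa: "a powr p = a * a powr (p - 1)" using a by (simp add: powr_mult_base)
  have pb: "b powr p = b * b powr (p - 1)" using b by (simp add: powr_mult_base)
  have pab: "(a+b) powr p = (a+b) * (a+b) powr (p - 1)" using ab by (simp add: powr_mult_base)
  show ?thesis
  proof (cases "x = 0 \<or> y = 0")
    case True
    then show ?thesis
    proof
      assume x0: "x = 0"
      have "b powr (p - 1) \<le> (a+b) powr (p - 1)" using a b p by (intro powr_mono2) auto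
      then have "y powr p \<le> (a + b) powr (p - 1) * (y powr p / b powr (p - 1))"
        using b by (simp add: field_simps mult_left_mono)
      then show ?thesis using x0 p by simp
    next
      assume y0: "y = 0"
      have "a powr (p - 1) \<le> (a+b) powr (p - 1)" using a b p by (intro powr_mono2) auto
      then have "x powr p \<le> (a + b) powr (p - 1) * (x powr p / a powr (p - 1))"
        using a by (simp add: field_simps mult_left_mono)
      then show ?thesis using y0 p by simp
    qed
  next
    case False
    then have xp: "x > 0" and yp: "y > 0" using x y by auto
    have cv: "convex_on {0<..} (\<lambda>x. x powr p)" by (rule powr_convex[OF p])
    have H: "((1 - b/(a+b)) * (x/a) + (b/(a+b)) * (y/b)) powr p \<le> (1 - b/(a+b)) * (x/a) powr p + (b/(a+b)) * (y/b) powr p"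
      using convex_onD[OF cv, of "b/(a+b)" "x/a" "y/b"] xp yp a b by simp
    have e1: "1 - b/(a+b) = a/(a+b)" using a b by (simp add: field_simps)
    have "(a/(a+b)) * (x/a) = x/(a+b)" "(b/(a+b)) * (y/b) = y/(a+b)" using a b by auto
    then have e2: "(a/(a+b)) * (x/a) + (b/(a+b)) * (y/b) = (x+y)/(a+b)"
      by (simp add: add_divide_distrib)
    have "((x+y)/(a+b)) powr p \<le> (a/(a+b)) * (x/a) powr p + (b/(a+b)) * (y/b) powr p"
      using H unfolding e1 e2 .
    then have "((x+y)/(a+b)) powr p \<le> (a/(a+b)) * (x powr p / a powr p) + (b/(a+b)) * (y powr p / b powr p)"
      using xp yp a b by (simp add: powr_divide)
    also have "\<dots> = (x powr p / a powr (p - 1) + y powr p / b powr (p - 1)) / (a+b)"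
    proof -
      have "a powr (p-1) > 0" "b powr (p-1) > 0" using a b by auto
      then have "(a/(a+b)) * (x powr p / (a * a powr (p-1))) = x powr p / a powr (p - 1) / (a+b)"
        "(b/(a+b)) * (y powr p / (b * b powr (p-1))) = y powr p / b powr (p - 1) / (a+b)"
        using a b by auto
      then show ?thesis by (simp add: pa pb add_divide_distrib)
    qed
    finally have "(x+y) powr p / ((a+b) * (a+b) powr (p-1)) \<le> (x powr p / a powr (p - 1) + y powr p / b powr (p - 1)) / (a+b)"
      using xp yp ab by (simp add: powr_divide pab)
    moreover have C: "(a+b) powr (p-1) > 0" using ab by simp
    ultimately have "(x+y) powr p / (a+b) powr (p-1) \<le> (x powr p / a powr (p - 1) + y powr p / b powr (p - 1))"
    proof -
      fix u R C :: real assume "u / ((a+b) * C) \<le> R / (a+b)" "C > 0"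
      have "u / C = (u / ((a+b) * C)) * (a+b)" "R = (R / (a+b)) * (a+b)" using ab \<open>C > 0\<close> by auto
      then show "u / C \<le> R" using \<open>u / ((a+b) * C) \<le> R / (a+b)\<close> ab
        by (metis less_imp_le mult_right_mono)
    qed
    then show ?thesis using C by (simp add: pos_divide_le_eq mult.commute)
  qed
qed

lemma conv3:
  fixes x y z a b c p :: real
  assumes "x \<ge> 0" "y \<ge> 0" "z \<ge> 0" "a > 0" "b > 0" "c > 0" "p \<ge> 1"
  shows "(x + y + z) powr p \<le> (a + b + c) powr (p - 1) *
     (x powr p / a powr (p - 1) + y powr p / b powr (p - 1) + z powr p / c powr (p - 1))"
proof -
  have "(x + y + z) powr p \<le> (a + b + c) powr (p - 1) * ((x+y) powr p / (a+b) powr (p - 1) + z powr p / c powr (p - 1))"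
    using assms by (intro conv2) auto
  also have "(x+y) powr p / (a+b) powr (p - 1) \<le> (x powr p / a powr (p - 1) + y powr p / b powr (p - 1))"
    using conv2[of x y a b p] assms by (simp add: field_simps)
  then have "(a + b + c) powr (p - 1) * ((x+y) powr p / (a+b) powr (p - 1) + z powr p / c powr (p - 1))
     \<le> (a + b + c) powr (p - 1) * (x powr p / a powr (p - 1) + y powr p / b powr (p - 1) + z powr p / c powr (p - 1))"
    by (intro mult_left_mono) auto
  finally show ?thesis .
qed

lemma coupling_bound:
  fixes M0 M1 :: "'o measure" and g Y :: "'o \<Rightarrow> real"
  assumes P0: "prob_space M0" and P1: "prob_space M1" and S: "sets M1 = sets M0"
    and gm[measurable]: "g \<in> borel_measurable M0" and Ym[measurable]: "Y \<in> borel_measurable M0"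
    and eqd: "\<And>B. B \<in> sets borel \<Longrightarrow> emeasure M1 (g -` B \<inter> space M0) = emeasure M0 (g -` B \<inter> space M0)"
    and d: "\<delta> > 0" and p: "p \<ge> 1" and E0: "E0 \<ge> 0" and E1: "E1 \<ge> 0"
    and I0: "(\<integral>\<^sup>+\<omega>. ennreal (\<bar>g \<omega> - Y \<omega>\<bar> powr p) \<partial>M0) = ennreal (E0 powr p)"
    and I1: "(\<integral>\<^sup>+\<omega>. ennreal (\<bar>g \<omega> - Y \<omega>\<bar> powr p) \<partial>M1) = ennreal (E1 powr p)"
  shows "(INF \<gamma>\<in>couplings (distr M0 borel Y) (distr M1 borel Y). \<integral>\<^sup>+ z. ennreal (\<bar>fst z - snd z\<bar> powr p) \<partial>\<gamma>)
           \<le> ennreal ((E0 + E1 + 3*\<delta>) powr p)"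
proof -
  interpret p0: prob_space M0 by fact
  interpret p1: prob_space M1 by fact
  have sp: "space M1 = space M0" using S by (rule sets_eq_imp_space_eq)
  have gm1[measurable]: "g \<in> borel_measurable M1" using gm by (simp add: measurable_cong_sets[OF S refl])
  have Ym1[measurable]: "Y \<in> borel_measurable M1" using Ym by (simp add: measurable_cong_sets[OF S refl])
  define b where "b = (\<lambda>\<omega>. \<lfloor>g \<omega> / \<delta>\<rfloor>)"
  have bm[measurable]: "b \<in> measurable M0 (count_space UNIV)" unfolding b_def by measurable
  have eqk: "emeasure M1 {\<omega>\<in>space M0. b \<omega> = k} = emeasure M0 {\<omega>\<in>space M0. b \<omega> = k}" for k
  proof -
    have E: "{\<omega>\<in>space M0. b \<omega> = k} = g -` {t. \<lfloor>t/\<delta>\<rfloor> = k} \<inter> space M0" by (auto simp: b_def)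
    have "{t::real. \<lfloor>t/\<delta>\<rfloor> = k} \<in> sets borel" by measurable
    from eqd[OF this] show ?thesis by (simp only: E)
  qed
  define q where "q = (\<lambda>k. measure M0 {\<omega>\<in>space M0. b \<omega> = k})"
  define F where "F = (\<lambda>z. if b (fst z) = b (snd z) then ennreal (1 / q (b (fst z))) else 0)"
  define N where "N = M0 \<Otimes>\<^sub>M M1"
  have G1: "\<And>\<phi>. \<phi> \<in> borel_measurable M0 \<Longrightarrow> (\<integral>\<^sup>+ z. F z * \<phi> (fst z) \<partial>N) = (\<integral>\<^sup>+ \<omega>. \<phi> \<omega> \<partial>M0)"
    and G2: "\<And>\<phi>. \<phi> \<in> borel_measurable M0 \<Longrightarrow> (\<integral>\<^sup>+ z. F z * \<phi> (snd z) \<partial>N) = (\<integral>\<^sup>+ \<omega>. \<phi> \<omega> \<partial>M1)"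
    and Fm[measurable]: "F \<in> borel_measurable N"
    using glue_marg[OF P0 P1 S bm eqk] unfolding F_def q_def N_def by auto
  define \<gamma> where "\<gamma> = distr (density N F) (borel \<Otimes>\<^sub>M borel) (\<lambda>z. (Y (fst z), Y (snd z)))"
  have spN: "space N = space M0 \<times> space M0" unfolding N_def by (simp add: space_pair_measure sp)
  have [measurable]: "(\<lambda>z. (Y (fst z), Y (snd z))) \<in> measurable N (borel \<Otimes>\<^sub>M borel)"
    unfolding N_def by measurable
  have marg0: "distr \<gamma> borel fst = distr M0 borel Y"
  proof (rule measure_eqI)
    show "sets (distr \<gamma> borel fst) = sets (distr M0 borel Y)" by simp
    fix B assume B: "B \<in> sets (distr \<gamma> borel fst)"
    then have Bb[measurable]: "B \<in> sets borel" by simp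
    have "emeasure (distr \<gamma> borel fst) B = emeasure (density N F) ((\<lambda>z. (Y (fst z), Y (snd z))) -` (fst -` B \<inter> space (borel \<Otimes>\<^sub>M borel)) \<inter> space N)"
      unfolding \<gamma>_def by (simp add: emeasure_distr)
    also have "(\<lambda>z. (Y (fst z), Y (snd z))) -` (fst -` B \<inter> space (borel \<Otimes>\<^sub>M borel)) \<inter> space N = {z\<in>space N. Y (fst z) \<in> B}"
      by (auto simp: space_pair_measure)
    also have "{z\<in>space N. Y (fst z) \<in> B} \<in> sets N" unfolding N_def by measurable
    then have "emeasure (density N F) {z\<in>space N. Y (fst z) \<in> B} = (\<integral>\<^sup>+ z. F z * indicator {\<omega>\<in>space M0. Y \<omega> \<in> B} (fst z) \<partial>N)"
      by (subst emeasure_density) (auto intro!: nn_integral_cong simp: spN split: split_indicator)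
    also have "\<dots> = emeasure M0 {\<omega>\<in>space M0. Y \<omega> \<in> B}"
      by (subst G1) auto
    also have "\<dots> = emeasure (distr M0 borel Y) B"
      by (simp add: emeasure_distr vimage_def Int_def conj_commute)
    finally show "emeasure (distr \<gamma> borel fst) B = emeasure (distr M0 borel Y) B" .
  qed
  have marg1: "distr \<gamma> borel snd = distr M1 borel Y"
  proof (rule measure_eqI)
    show "sets (distr \<gamma> borel snd) = sets (distr M1 borel Y)" by simp
    fix B assume B: "B \<in> sets (distr \<gamma> borel snd)"
    then have Bb[measurable]: "B \<in> sets borel" by simp
    have "emeasure (distr \<gamma> borel snd) B = emeasure (density N F) ((\<lambda>z. (Y (fst z), Y (snd z))) -` (snd -` B \<inter> space (borel \<Otimes>\<^sub>M borel)) \<inter> space N)"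
      unfolding \<gamma>_def by (simp add: emeasure_distr)
    also have "(\<lambda>z. (Y (fst z), Y (snd z))) -` (snd -` B \<inter> space (borel \<Otimes>\<^sub>M borel)) \<inter> space N = {z\<in>space N. Y (snd z) \<in> B}"
      by (auto simp: space_pair_measure)
    also have "{z\<in>space N. Y (snd z) \<in> B} \<in> sets N" unfolding N_def by measurable
    then have "emeasure (density N F) {z\<in>space N. Y (snd z) \<in> B} = (\<integral>\<^sup>+ z. F z * indicator {\<omega>\<in>space M0. Y \<omega> \<in> B} (snd z) \<partial>N)"
      by (subst emeasure_density) (auto intro!: nn_integral_cong simp: spN split: split_indicator)
    also have "\<dots> = emeasure M1 {\<omega>\<in>space M0. Y \<omega> \<in> B}"
      by (subst G2) (auto simp: S)
    also have "\<dots> = emeasure (distr M1 borel Y) B"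
      by (simp add: emeasure_distr vimage_def Int_def conj_commute sp)
    finally show "emeasure (distr \<gamma> borel snd) B = emeasure (distr M1 borel Y) B" .
  qed
  have "prob_space \<gamma>"
  proof (rule prob_spaceI)
    have "emeasure \<gamma> (space \<gamma>) = emeasure (distr \<gamma> borel fst) UNIV"
    proof -
      have s\<gamma>: "sets \<gamma> = sets (borel \<Otimes>\<^sub>M borel)" by (simp add: \<gamma>_def)
      have fm: "fst \<in> measurable \<gamma> (borel :: real measure)"
        using measurable_cong_sets[OF s\<gamma> refl, of "borel :: real measure"] measurable_fst by blast
      have "space \<gamma> = UNIV" using sets_eq_imp_space_eq[OF s\<gamma>] by (simp add: space_pair_measure)
      then show ?thesis by (simp add: emeasure_distr[OF fm])
    qed
    also have "\<dots> = 1" unfolding marg0 by (simp add: emeasure_distr p0.emeasure_space_1)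
    finally show "emeasure \<gamma> (space \<gamma>) = 1" .
  qed
  then have coup: "\<gamma> \<in> couplings (distr M0 borel Y) (distr M1 borel Y)"
    unfolding couplings_def using marg0 marg1 by (simp add: \<gamma>_def)
  have [measurable]: "(\<lambda>z. \<bar>fst z - snd z\<bar> powr p) \<in> borel_measurable (borel \<Otimes>\<^sub>M borel :: (real \<times> real) measure)"
    by measurable
  have cost: "(\<integral>\<^sup>+ z. ennreal (\<bar>fst z - snd z\<bar> powr p) \<partial>\<gamma>) = (\<integral>\<^sup>+ z. F z * ennreal (\<bar>Y (fst z) - Y (snd z)\<bar> powr p) \<partial>N)"
    unfolding \<gamma>_def by (simp add: nn_integral_distr nn_integral_density)
  define a where "a = E0 + \<delta>"
  define c where "c = E1 + \<delta>"
  define C where "C = (a + \<delta> + c) powr (p - 1)"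
  define u where "u = (\<lambda>\<omega>. \<bar>g \<omega> - Y \<omega>\<bar> powr p)"
  have a0: "a > 0" and c0: "c > 0" using d E0 E1 by (auto simp: a_def c_def)
  have C0: "C \<ge> 0" unfolding C_def by simp
  have a'0: "a powr (p - 1) > 0" and c'0: "c powr (p - 1) > 0" using a0 c0 by auto
  have u0: "u x \<ge> 0" for x unfolding u_def by simp
  have um0[measurable]: "(\<lambda>\<omega>. ennreal (u \<omega>)) \<in> borel_measurable M0" unfolding u_def by measurable
  have [measurable]: "(\<lambda>z. ennreal (u (fst z))) \<in> borel_measurable N" unfolding N_def u_def by measurable
  have [measurable]: "(\<lambda>z. ennreal (u (snd z))) \<in> borel_measurable N" unfolding N_def u_def by measurable
  have pt: "F z * ennreal (\<bar>Y (fst z) - Y (snd z)\<bar> powr p) \<le>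
     ennreal (C / a powr (p - 1)) * (F z * ennreal (u (fst z))) + ennreal (C * \<delta>) * F z
       + ennreal (C / c powr (p - 1)) * (F z * ennreal (u (snd z)))" for z
  proof (cases "b (fst z) = b (snd z)")
    case False then show ?thesis by (simp add: F_def)
  next
    case True
    define r where "r = 1 / q (b (fst z))"
    have r0: "r \<ge> 0" unfolding r_def q_def by simp
    have Fz: "F z = ennreal r" using True by (simp add: F_def r_def)
    define x where "x = fst z"
    define y where "y = snd z"
    have gd: "\<bar>g x - g y\<bar> \<le> \<delta>"
    proof -
      have e: "\<lfloor>g x / \<delta>\<rfloor> = \<lfloor>g y / \<delta>\<rfloor>" using True by (simp add: b_def x_def y_def)
      have "\<bar>g x / \<delta> - g y / \<delta>\<bar> < 1"
        using e floor_correct[of "g x / \<delta>"] floor_correct[of "g y / \<delta>"] by linarith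
      then have "\<bar>g x - g y\<bar> / \<delta> < 1" using d by (simp add: diff_divide_distrib[symmetric])
      then show ?thesis using d by (simp add: divide_less_eq)
    qed
    have tri: "\<bar>Y x - Y y\<bar> \<le> \<bar>g x - Y x\<bar> + \<delta> + \<bar>g y - Y y\<bar>" using gd by linarith
    have "\<bar>Y x - Y y\<bar> powr p \<le> (\<bar>g x - Y x\<bar> + \<delta> + \<bar>g y - Y y\<bar>) powr p"
      by (rule powr_mono2) (use p tri in auto)
    also have "\<dots> \<le> C * (u x / a powr (p - 1) + \<delta> powr p / \<delta> powr (p - 1) + u y / c powr (p - 1))"
      unfolding C_def u_def by (rule conv3) (use p d a0 c0 in auto)
    also have "\<delta> powr p / \<delta> powr (p - 1) = \<delta>" using d by (simp add: powr_diff[symmetric])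
    finally have L: "\<bar>Y x - Y y\<bar> powr p \<le> C / a powr (p - 1) * u x + C * \<delta> + C / c powr (p - 1) * u y"
      by (simp add: algebra_simps)
    have L2: "r * \<bar>Y x - Y y\<bar> powr p \<le> C / a powr (p - 1) * (r * u x) + C * \<delta> * r + C / c powr (p - 1) * (r * u y)"
      using mult_left_mono[OF L r0] by (simp add: algebra_simps)
    have R1: "ennreal (C / a powr (p - 1)) * (ennreal r * ennreal (u x)) = ennreal (C / a powr (p - 1) * (r * u x))"
    proof -
      have "ennreal r * ennreal (u x) = ennreal (r * u x)" using r0 u0 by (rule ennreal_mult[symmetric])
      moreover have "ennreal (C / a powr (p - 1)) * ennreal (r * u x) = ennreal (C / a powr (p - 1) * (r * u x))"
        by (rule ennreal_mult[symmetric]) (use C0 a'0 r0 u0 in auto)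
      ultimately show ?thesis by simp
    qed
    have R2: "ennreal (C * \<delta>) * ennreal r = ennreal (C * \<delta> * r)"
      using C0 d r0 by (simp add: ennreal_mult)
    have R3: "ennreal (C / c powr (p - 1)) * (ennreal r * ennreal (u y)) = ennreal (C / c powr (p - 1) * (r * u y))"
    proof -
      have "ennreal r * ennreal (u y) = ennreal (r * u y)" using r0 u0 by (rule ennreal_mult[symmetric])
      moreover have "ennreal (C / c powr (p - 1)) * ennreal (r * u y) = ennreal (C / c powr (p - 1) * (r * u y))"
        by (rule ennreal_mult[symmetric]) (use C0 c'0 r0 u0 in auto)
      ultimately show ?thesis by simp
    qed
    have nn1: "C / a powr (p - 1) * (r * u x) \<ge> 0" "C * \<delta> * r \<ge> 0" "C / c powr (p - 1) * (r * u y) \<ge> 0"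
      using C0 a'0 c'0 r0 u0 d by auto
    have "ennreal r * ennreal (\<bar>Y x - Y y\<bar> powr p) = ennreal (r * \<bar>Y x - Y y\<bar> powr p)"
      using r0 by (simp add: ennreal_mult)
    also have "\<dots> \<le> ennreal (C / a powr (p - 1) * (r * u x) + C * \<delta> * r + C / c powr (p - 1) * (r * u y))"
      by (rule ennreal_leI[OF L2])
    also have "\<dots> = ennreal (C / a powr (p - 1)) * (ennreal r * ennreal (u x)) + ennreal (C * \<delta>) * ennreal r
       + ennreal (C / c powr (p - 1)) * (ennreal r * ennreal (u y))"
      unfolding R1 R2 R3 using nn1 by (simp add: ennreal_plus)
    finally show ?thesis unfolding Fz x_def y_def .
  qed
  have intF: "(\<integral>\<^sup>+ z. F z \<partial>N) = 1"
    using G1[of "\<lambda>_. 1"] by (simp add: p0.emeasure_space_1)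
  have intu0: "(\<integral>\<^sup>+ z. F z * ennreal (u (fst z)) \<partial>N) = ennreal (E0 powr p)"
    using G1[OF um0] I0 by (simp add: u_def)
  have intu1: "(\<integral>\<^sup>+ z. F z * ennreal (u (snd z)) \<partial>N) = ennreal (E1 powr p)"
    using G2[OF um0] I1 by (simp add: u_def)
  have "(INF \<gamma>\<in>couplings (distr M0 borel Y) (distr M1 borel Y). \<integral>\<^sup>+ z. ennreal (\<bar>fst z - snd z\<bar> powr p) \<partial>\<gamma>)
        \<le> (\<integral>\<^sup>+ z. ennreal (\<bar>fst z - snd z\<bar> powr p) \<partial>\<gamma>)"
    by (rule INF_lower[OF coup])
  also have "\<dots> \<le> (\<integral>\<^sup>+ z. (ennreal (C / a powr (p - 1)) * (F z * ennreal (u (fst z))) + ennreal (C * \<delta>) * F z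
       + ennreal (C / c powr (p - 1)) * (F z * ennreal (u (snd z)))) \<partial>N)"
    unfolding cost by (rule nn_integral_mono) (rule pt)
  also have "\<dots> = ennreal (C / a powr (p - 1)) * ennreal (E0 powr p) + ennreal (C * \<delta>)
       + ennreal (C / c powr (p - 1)) * ennreal (E1 powr p)"
    by (simp add: nn_integral_add nn_integral_cmult intF intu0 intu1)
  also have "\<dots> = ennreal (C / a powr (p - 1) * E0 powr p + C * \<delta> + C / c powr (p - 1) * E1 powr p)"
  proof -
    have m1: "ennreal (C / a powr (p - 1)) * ennreal (E0 powr p) = ennreal (C / a powr (p - 1) * E0 powr p)"
      by (rule ennreal_mult[symmetric]) (use C0 a'0 in auto)
    have m3: "ennreal (C / c powr (p - 1)) * ennreal (E1 powr p) = ennreal (C / c powr (p - 1) * E1 powr p)"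
      by (rule ennreal_mult[symmetric]) (use C0 c'0 in auto)
    have nn: "C / a powr (p - 1) * E0 powr p \<ge> 0" "C * \<delta> \<ge> 0" "C / c powr (p - 1) * E1 powr p \<ge> 0"
      using C0 a'0 c'0 d by auto
    show ?thesis unfolding m1 m3 using nn by (simp add: ennreal_plus)
  qed
  also have "\<dots> \<le> ennreal ((E0 + E1 + 3*\<delta>) powr p)"
  proof (rule ennreal_leI)
    have pa: "a powr p = a * a powr (p - 1)" using a0 by (simp add: powr_mult_base)
    have pc: "c powr p = c * c powr (p - 1)" using c0 by (simp add: powr_mult_base)
    have "E0 powr p \<le> a powr p" using E0 d p by (intro powr_mono2) (auto simp: a_def)
    then have "C / a powr (p - 1) * E0 powr p \<le> C / a powr (p - 1) * (a * a powr (p - 1))"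
      unfolding pa using C0 a'0 by (intro mult_left_mono) auto
    also have "\<dots> = C * a" using a'0 by simp
    finally have A: "C / a powr (p - 1) * E0 powr p \<le> C * a" .
    have "E1 powr p \<le> c powr p" using E1 d p by (intro powr_mono2) (auto simp: c_def)
    then have "C / c powr (p - 1) * E1 powr p \<le> C / c powr (p - 1) * (c * c powr (p - 1))"
      unfolding pc using C0 c'0 by (intro mult_left_mono) auto
    also have "\<dots> = C * c" using c'0 by simp
    finally have B: "C / c powr (p - 1) * E1 powr p \<le> C * c" .
    have "C * (a + \<delta> + c) = (a + \<delta> + c) powr p"
    proof -
      have "a + \<delta> + c > 0" using a0 c0 d by simp
      then have "(a + \<delta> + c) powr p = (a + \<delta> + c) * (a + \<delta> + c) powr (p - 1)" by (simp add: powr_mult_base)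
      then show ?thesis unfolding C_def by (simp add: mult.commute)
    qed
    moreover have "a + \<delta> + c = E0 + E1 + 3*\<delta>" by (simp add: a_def c_def)
    ultimately show "C / a powr (p - 1) * E0 powr p + C * \<delta> + C / c powr (p - 1) * E1 powr p \<le> (E0 + E1 + 3*\<delta>) powr p"
      using A B by (simp add: algebra_simps)
  qed
  finally show ?thesis .
qed



theorem theorem1:
  fixes M :: "'o measure"
    and \<X> :: "(real ^ 'd) set"
    and X :: "'o \<Rightarrow> real ^ 'd"
    and A :: "'o \<Rightarrow> nat"
    and Y :: "'o \<Rightarrow> real"
    and h :: "real ^ 'd \<Rightarrow> real"
    and p :: real
  assumes "prob_space M"
    and "X \<in> borel_measurable M"
    and "\<And>\<omega>. \<omega> \<in> space M \<Longrightarrow> X \<omega> \<in> \<X>"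
    and "A \<in> measurable M (count_space UNIV)"
    and "\<And>\<omega>. \<omega> \<in> space M \<Longrightarrow> A \<omega> \<in> {0, 1}"
    and "measure M {\<omega> \<in> space M. A \<omega> = 0} > 0"
    and "measure M {\<omega> \<in> space M. A \<omega> = 1} > 0"
    and "Y \<in> borel_measurable M"
    and "AE \<omega> in M. Y \<omega> \<in> {-1..1}"
    and "h \<in> borel_measurable (restrict_space borel \<X>)"
    and "prob_space.indep_var M (borel :: real measure) (\<lambda>\<omega>. h (X \<omega>)) (borel :: real measure) (\<lambda>\<omega>. real (A \<omega>))"
    and "p \<ge> 1"
  shows "eps_p p (cond_measure M A 0) (\<lambda>\<omega>. h (X \<omega>)) Y
           + eps_p p (cond_measure M A 1) (\<lambda>\<omega>. h (X \<omega>)) Y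
         \<ge> wasserstein p (distr (cond_measure M A 0) borel Y) (distr (cond_measure M A 1) borel Y)"
proof -
  note assms
  interpret prob_space M by fact
  have Pm: "prob_space M" by fact
  have Xr: "X \<in> measurable M (restrict_space borel \<X>)"
    by (rule measurable_restrict_space2) (use assms(2,3) in auto)
  have gm[measurable]: "(\<lambda>\<omega>. h (X \<omega>)) \<in> borel_measurable M"
    using measurable_comp[OF Xr assms(10)] by (simp add: comp_def)
  have Am[measurable]: "A \<in> measurable M (count_space UNIV)" by fact
  have Ym[measurable]: "Y \<in> borel_measurable M" by fact
  have Sa[measurable]: "{\<omega>\<in>space M. A \<omega> = a} \<in> sets M" for a by measurable
  have cm: "prob_space (cond_measure M A a)" "sets (cond_measure M A a) = sets M"
     "space (cond_measure M A a) = space M"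
    and eqa: "\<And>B. B \<in> sets borel \<Longrightarrow> emeasure (cond_measure M A a) ((\<lambda>\<omega>. h (X \<omega>)) -` B \<inter> space M)
        = ennreal (prob ((\<lambda>\<omega>. h (X \<omega>)) -` B \<inter> space M))"
    if a: "a \<in> {0, 1}" for a
  proof -
    have pos: "prob {\<omega>\<in>space M. A \<omega> = a} > 0" using a assms(6,7) by auto
    have em: "emeasure M {\<omega>\<in>space M. A \<omega> = a} = ennreal (prob {\<omega>\<in>space M. A \<omega> = a})"
      by (simp add: emeasure_eq_measure)
    show "prob_space (cond_measure M A a)" unfolding cond_measure_def
      by (rule prob_space_uniform_measure) (use pos em in auto)
    show "sets (cond_measure M A a) = sets M" "space (cond_measure M A a) = space M"
      unfolding cond_measure_def by auto
    fix B :: "real set" assume B[measurable]: "B \<in> sets borel"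
    have ind: "prob ((\<lambda>x. (h (X x), real (A x))) -` (B \<times> {real a}) \<inter> space M) =
      prob ((\<lambda>x. h (X x)) -` B \<inter> space M) * prob ((\<lambda>x. real (A x)) -` {real a} \<inter> space M)"
      by (rule indep_varD[OF assms(11)]) auto
    have s1: "(\<lambda>x. (h (X x), real (A x))) -` (B \<times> {real a}) \<inter> space M = {\<omega>\<in>space M. A \<omega> = a} \<inter> ((\<lambda>\<omega>. h (X \<omega>)) -` B \<inter> space M)"
      by auto
    have s2: "(\<lambda>x. real (A x)) -` {real a} \<inter> space M = {\<omega>\<in>space M. A \<omega> = a}" by auto
    have "emeasure (cond_measure M A a) ((\<lambda>\<omega>. h (X \<omega>)) -` B \<inter> space M)
      = emeasure M ({\<omega>\<in>space M. A \<omega> = a} \<inter> ((\<lambda>\<omega>. h (X \<omega>)) -` B \<inter> space M)) / emeasure M {\<omega>\<in>space M. A \<omega> = a}"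
      unfolding cond_measure_def by (subst emeasure_uniform_measure) auto
    also have "\<dots> = ennreal (prob ((\<lambda>\<omega>. h (X \<omega>)) -` B \<inter> space M) * prob {\<omega>\<in>space M. A \<omega> = a}) / ennreal (prob {\<omega>\<in>space M. A \<omega> = a})"
      using ind unfolding s1 s2 by (simp add: emeasure_eq_measure)
    also have "\<dots> = ennreal (prob ((\<lambda>\<omega>. h (X \<omega>)) -` B \<inter> space M))"
      using pos by (simp add: divide_ennreal)
    finally show "emeasure (cond_measure M A a) ((\<lambda>\<omega>. h (X \<omega>)) -` B \<inter> space M) = ennreal (prob ((\<lambda>\<omega>. h (X \<omega>)) -` B \<inter> space M))" .
  qed
  let ?M0 = "cond_measure M A 0" and ?M1 = "cond_measure M A 1"
  let ?I0 = "\<integral>\<^sup>+ \<omega>. ennreal (\<bar>h (X \<omega>) - Y \<omega>\<bar> powr p) \<partial>?M0"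
  let ?I1 = "\<integral>\<^sup>+ \<omega>. ennreal (\<bar>h (X \<omega>) - Y \<omega>\<bar> powr p) \<partial>?M1"
  let ?W = "INF \<gamma>\<in>couplings (distr ?M0 borel Y) (distr ?M1 borel Y). \<integral>\<^sup>+ z. ennreal (\<bar>fst z - snd z\<bar> powr p) \<partial>\<gamma>"
  have p: "p \<ge> 1" by fact
  show ?thesis
  proof (cases "?I0 = \<infinity> \<or> ?I1 = \<infinity>")
    case True
    then have "eps_p p ?M0 (\<lambda>\<omega>. h (X \<omega>)) Y = \<infinity> \<or> eps_p p ?M1 (\<lambda>\<omega>. h (X \<omega>)) Y = \<infinity>"
      unfolding eps_p_def ennpowr_def by (elim disjE) simp_all
    then have S: "eps_p p ?M0 (\<lambda>\<omega>. h (X \<omega>)) Y + eps_p p ?M1 (\<lambda>\<omega>. h (X \<omega>)) Y = \<infinity>"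
      by (elim disjE) simp_all
    show ?thesis unfolding S by simp
  next
    case False
    then have n0: "?I0 \<noteq> \<infinity>" and n1: "?I1 \<noteq> \<infinity>" by auto
    obtain i0 where i0: "?I0 = ennreal i0" "i0 \<ge> 0" using n0 by (cases ?I0 rule: ennreal_cases) auto
    obtain i1 where i1: "?I1 = ennreal i1" "i1 \<ge> 0" using n1 by (cases ?I1 rule: ennreal_cases) auto
    define E0 where "E0 = i0 powr (1/p)"
    define E1 where "E1 = i1 powr (1/p)"
    have E0: "E0 \<ge> 0" and E1: "E1 \<ge> 0" by (auto simp: E0_def E1_def)
    have pw: "(x powr (1/p)) powr p = x" if "x \<ge> 0" for x :: real
      using p that by (simp add: powr_powr)
    have I0': "?I0 = ennreal (E0 powr p)" using i0 pw by (simp add: E0_def)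
    have I1': "?I1 = ennreal (E1 powr p)" using i1 pw by (simp add: E1_def)
    have eps0: "eps_p p ?M0 (\<lambda>\<omega>. h (X \<omega>)) Y = ennreal E0"
      unfolding eps_p_def ennpowr_def using i0 by (simp add: E0_def)
    have eps1: "eps_p p ?M1 (\<lambda>\<omega>. h (X \<omega>)) Y = ennreal E1"
      unfolding eps_p_def ennpowr_def using i1 by (simp add: E1_def)
    have gm0: "(\<lambda>\<omega>. h (X \<omega>)) \<in> borel_measurable ?M0"
      using gm by (simp add: measurable_cong_sets[OF cm(2)[of 0] refl])
    have Ym0: "Y \<in> borel_measurable ?M0"
      using Ym by (simp add: measurable_cong_sets[OF cm(2)[of 0] refl])
    have bound: "?W \<le> ennreal ((E0 + E1 + 3*\<delta>) powr p)" if d: "\<delta> > 0" for \<delta>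
    proof (rule coupling_bound[OF cm(1)[of 0] cm(1)[of 1] _ gm0 Ym0 _ d p E0 E1 I0' I1'])
      show "sets ?M1 = sets ?M0" using cm(2)[of 0] cm(2)[of 1] by simp
      fix B :: "real set" assume "B \<in> sets borel"
      then show "emeasure ?M1 ((\<lambda>\<omega>. h (X \<omega>)) -` B \<inter> space ?M0) = emeasure ?M0 ((\<lambda>\<omega>. h (X \<omega>)) -` B \<inter> space ?M0)"
        using eqa[of 0 B] eqa[of 1 B] cm(3)[of 0] by simp
    qed simp_all
    have "?W \<le> ennreal ((E0 + E1 + 3) powr p)" using bound[of 1] by simp
    then have "?W < \<infinity>" by (rule le_less_trans) simp
    then obtain w where w: "?W = ennreal w" "w \<ge> 0" by (cases ?W rule: ennreal_cases) auto
    have "w powr (1/p) \<le> E0 + E1"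
    proof (rule field_le_epsilon)
      fix e :: real assume e: "e > 0"
      have "ennreal w \<le> ennreal ((E0 + E1 + 3*(e/3)) powr p)" using bound[of "e/3"] e w by simp
      then have "w \<le> (E0 + E1 + e) powr p" using w(2) by (simp add: ennreal_le_iff)
      then have "w powr (1/p) \<le> ((E0 + E1 + e) powr p) powr (1/p)"
        using w(2) p by (intro powr_mono2) auto
      also have "\<dots> = E0 + E1 + e" using p E0 E1 e by (simp add: powr_powr)
      finally show "w powr (1/p) \<le> E0 + E1 + e" .
    qed
    then have "ennreal (w powr (1/p)) \<le> ennreal (E0 + E1)" by (rule ennreal_leI)
    also have "\<dots> = ennreal E0 + ennreal E1" using E0 E1 by (rule ennreal_plus)
    finally have fin: "ennreal (w powr (1/p)) \<le> ennreal E0 + ennreal E1" .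
    have "wasserstein p (distr ?M0 borel Y) (distr ?M1 borel Y) = ennreal (w powr (1/p))"
      unfolding wasserstein_def ennpowr_def using w by simp
    then show ?thesis unfolding eps0 eps1 using fin by simp
  qed
qed

end
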